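(* There is no nonnegative bivariate information decomposition $(SI,UI,CI)$ in which $UI$ satisfies the Blackwell property and $SI$ satisfies left monotonicity.
   Context: All random variables have finite alphabets. A nonnegative bivariate information decomposition consists of nonnegative functions $SI(S;X_1,X_2)$, $UI(S;X_1\setminus X_2)$, $UI(S;X_2\setminus X_1)$, $CI(S;X_1,X_2)$, defined for every joint distribution of $(S,X_1,X_2)$ with arbitrary finite alphabets and depending continuously on it, such that $I(S;X_1X_2)=SI(S;X_1,X_2)+CI(S;X_1,X_2)+UI(S;X_1\setminus X_2)+UI(S;X_2\setminus X_1)$, $I(S;X_1)=SI(S;X_1,X_2)+UI(S;X_1\setminus X_2)$ and $I(S;X_2)=SI(S;X_1,X_2)+UI(S;X_2\setminus X_1)$, where $I$ denotes mutual information. $UI$ has the Blackwell property if for every joint distribution $P_{SX_1X_2}$: $UI(S;X_1\setminus X_2)=0$ if and only if there exists a random variable $X_1'$ such that $S - X_2 - X_1'$ is a Markov chain and $P_{SX_1'}=P_{SX_1}$. $SI$ satisfies left monotonicity if $SI(S;X_1,X_2)\ge SI(f(S);X_1,X_2)$ for all $(S,X_1,X_2)$ and every function $f$ on the alphabet of $S$. *)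

theory Defs
  imports "HOL-Probability.Probability_Mass_Function"
begin

text \<open>Joint distributions of (S, X1, X2) with finite alphabets are encoded as
  finitely supported pmfs on nat triples (every finite alphabet embeds into nat).\<close>

type_synonym dist3 = "(nat \<times> nat \<times> nat) pmf"

definition fin_dist :: "'a pmf \<Rightarrow> bool" where
  "fin_dist P \<longleftrightarrow> finite (set_pmf P)"

definition mutual_info :: "('a \<times> 'b) pmf \<Rightarrow> real" where
  "mutual_info Q = (\<Sum>(a,b)\<in>set_pmf Q.
     pmf Q (a,b) * log 2 (pmf Q (a,b) / (pmf (map_pmf fst Q) a * pmf (map_pmf snd Q) b)))"

definition I_S_X1X2 :: "dist3 \<Rightarrow> real" where
  "I_S_X1X2 P = mutual_info (map_pmf (\<lambda>(s,x1,x2). (s,(x1,x2))) P)"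

definition I_S_X1 :: "dist3 \<Rightarrow> real" where
  "I_S_X1 P = mutual_info (map_pmf (\<lambda>(s,x1,x2). (s,x1)) P)"

definition I_S_X2 :: "dist3 \<Rightarrow> real" where
  "I_S_X2 P = mutual_info (map_pmf (\<lambda>(s,x1,x2). (s,x2)) P)"

definition swap12 :: "dist3 \<Rightarrow> dist3" where
  "swap12 P = map_pmf (\<lambda>(s,x1,x2). (s,x2,x1)) P"

text \<open>Continuity: on distributions supported in any fixed finite set (i.e. with fixed
  finite alphabets), F is (sequentially) continuous in the probability vector.\<close>
definition continuous_dist :: "(dist3 \<Rightarrow> real) \<Rightarrow> bool" where
  "continuous_dist F \<longleftrightarrow>
     (\<forall>A Ps P. finite A \<longrightarrow> (\<forall>n. set_pmf (Ps n) \<subseteq> A) \<longrightarrow> set_pmf P \<subseteq> A \<longrightarrow>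
        (\<forall>x. (\<lambda>n. pmf (Ps n) x) \<longlonglongrightarrow> pmf P x) \<longrightarrow> (\<lambda>n. F (Ps n)) \<longlonglongrightarrow> F P)"

text \<open>Nonnegative bivariate information decomposition. UI is a single function;
  UI(S;X1\X2) = UI P and UI(S;X2\X1) = UI (swap12 P).\<close>
definition nonneg_decomp :: "(dist3 \<Rightarrow> real) \<Rightarrow> (dist3 \<Rightarrow> real) \<Rightarrow> (dist3 \<Rightarrow> real) \<Rightarrow> bool" where
  "nonneg_decomp SI UI CI \<longleftrightarrow>
     continuous_dist SI \<and> continuous_dist UI \<and> continuous_dist CI \<and>
     (\<forall>P. fin_dist P \<longrightarrow>
        SI P \<ge> 0 \<and> UI P \<ge> 0 \<and> CI P \<ge> 0 \<and>
        I_S_X1X2 P = SI P + CI P + UI P + UI (swap12 P) \<and>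
        I_S_X1 P = SI P + UI P \<and>
        I_S_X2 P = SI P + UI (swap12 P))"

definition markov_chain :: "('a \<times> 'b \<times> 'c) pmf \<Rightarrow> bool" where
  "markov_chain R \<longleftrightarrow>
     (\<forall>a b c. pmf R (a,b,c) * pmf (map_pmf (\<lambda>(a,b,c). b) R) b =
              pmf (map_pmf (\<lambda>(a,b,c). (a,b)) R) (a,b) * pmf (map_pmf (\<lambda>(a,b,c). (b,c)) R) (b,c))"

definition blackwell :: "(dist3 \<Rightarrow> real) \<Rightarrow> bool" where
  "blackwell UI \<longleftrightarrow>
     (\<forall>P. fin_dist P \<longrightarrow>
        (UI P = 0 \<longleftrightarrow>
          (\<exists>Q :: (nat \<times> nat \<times> nat \<times> nat) pmf.
             fin_dist Q \<and>
             map_pmf (\<lambda>(s,x1,x2,y). (s,x1,x2)) Q = P \<and>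
             markov_chain (map_pmf (\<lambda>(s,x1,x2,y). (s,x2,y)) Q) \<and>
             map_pmf (\<lambda>(s,x1,x2,y). (s,y)) Q = map_pmf (\<lambda>(s,x1,x2). (s,x1)) P)))"

definition left_monotone :: "(dist3 \<Rightarrow> real) \<Rightarrow> bool" where
  "left_monotone SI \<longleftrightarrow>
     (\<forall>P (f :: nat \<Rightarrow> nat). fin_dist P \<longrightarrow>
        SI P \<ge> SI (map_pmf (\<lambda>(s,x1,x2). (f s, x1, x2)) P))"

end

theory Submission imports Defs begin

definition AA :: "(nat\<times>nat\<times>nat) set" where
 "AA = {(0,0,0),(0,2,0),(1,0,2),(1,2,2),(2,1,1),(2,2,1),(3,1,2),(3,2,2)}"

lemma pmf_map_of_set: "finite A \<Longrightarrow> A \<noteq> {} \<Longrightarrow>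
  pmf (map_pmf g (pmf_of_set A)) z = card (A \<inter> g -` {z}) / card A"
  by (simp add: pmf_map measure_pmf_of_set)

lemma AA_fin: "finite AA" "AA \<noteq> {}" unfolding AA_def by simp_all

lemma fiber:
  fixes R :: "('a \<times> 'b \<times> 'c) pmf"
  assumes "\<And>b. (a0,b) \<in> set_pmf (map_pmf (\<lambda>(a,b,c). (a,b)) R) \<Longrightarrow> b = b0"
  shows "pmf (map_pmf (\<lambda>(a,b,c). (a,c)) R) (a0,c) = pmf R (a0,b0,c)"
proof -
  have "pmf (map_pmf (\<lambda>(a,b,c). (a,c)) R) (a0,c) = measure R ((\<lambda>(a,b,c). (a,c)) -` {(a0,c)})"
    by (simp add: pmf_map)
  also have "\<dots> = measure R ((\<lambda>(a,b,c). (a,c)) -` {(a0,c)} \<inter> set_pmf R)"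
    by (simp add: measure_Int_set_pmf)
  also have "(\<lambda>(a,b,c). (a,c)) -` {(a0,c)} \<inter> set_pmf R = {(a0,b0,c)} \<inter> set_pmf R"
  proof (intro set_eqI iffI)
    fix x assume x: "x \<in> (\<lambda>(a,b,c). (a,c)) -` {(a0,c)} \<inter> set_pmf R"
    then obtain b where xb: "x = (a0,b,c)" by (cases x) auto
    with x have "(a0,b) \<in> set_pmf (map_pmf (\<lambda>(a,b,c). (a,b)) R)" by force
    then have "b = b0" using assms by blast
    then show "x \<in> {(a0,b0,c)} \<inter> set_pmf R" using x xb by auto
  qed auto
  also have "measure R ({(a0,b0,c)} \<inter> set_pmf R) = pmf R (a0,b0,c)"
    by (simp add: measure_Int_set_pmf measure_pmf_single)
  finally show ?thesis .
qed

lemma markov_dup: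
  fixes R0 :: "('a \<times> 'b) pmf"
  shows "markov_chain (map_pmf (\<lambda>(a,b). (a,b,b)) R0)"
proof -
  have inj: "inj (\<lambda>(a,b). (a,b,b))" by (auto simp: inj_def)
  have p1: "pmf (map_pmf (\<lambda>(a,b). (a,b,b)) R0) (a,b,c) = (if c = b then pmf R0 (a,b) else 0)" for a b c
  proof (cases "c = b")
    case True
    then show ?thesis using pmf_map_inj'[OF inj, of R0 "(a,b)"] by simp
  next
    case False
    then have "(a,b,c) \<notin> set_pmf (map_pmf (\<lambda>(a,b). (a,b,b)) R0)" by auto
    then show ?thesis using False by (simp add: pmf_eq_0_set_pmf)
  qed
  have m1: "map_pmf (\<lambda>(a,b,c). b) (map_pmf (\<lambda>(a,b). (a,b,b)) R0) = map_pmf snd R0"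
    by (simp add: map_pmf_comp case_prod_beta)
  have m2: "map_pmf (\<lambda>(a,b,c). (a,b)) (map_pmf (\<lambda>(a,b). (a,b,b)) R0) = R0"
    by (simp add: map_pmf_comp case_prod_beta)
  have m3: "map_pmf (\<lambda>(a,b,c). (b,c)) (map_pmf (\<lambda>(a,b). (a,b,b)) R0) = map_pmf (\<lambda>b. (b,b)) (map_pmf snd R0)"
    by (simp add: map_pmf_comp case_prod_beta)
  have inj2: "inj (\<lambda>b. (b,b))" by (auto simp: inj_def)
  have p3: "pmf (map_pmf (\<lambda>b. (b,b)) (map_pmf snd R0)) (b,c) = (if b = c then pmf (map_pmf snd R0) b else 0)" for b c
  proof (cases "c = b")
    case True
    then show ?thesis using pmf_map_inj'[OF inj2, of "map_pmf snd R0" b] by simp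
  next
    case False
    then have "(b,c) \<notin> set_pmf (map_pmf (\<lambda>b. (b,b)) (map_pmf snd R0))" by auto
    then show ?thesis using False by (simp add: pmf_eq_0_set_pmf)
  qed
  show ?thesis unfolding markov_chain_def m1 m2 m3 p1 p3 by auto
qed

lemma I1: "mutual_info (map_pmf (\<lambda>(s,x1,x2). (s,x1)) (pmf_of_set AA)) = 1/2"
  unfolding mutual_info_def
  by (simp add: AA_def pmf_map_of_set map_pmf_comp insert_absorb)

lemma I2: "mutual_info (map_pmf (\<lambda>(s,x1,x2). (s div 2,x1)) (pmf_of_set AA)) = 1/2"
  unfolding mutual_info_def
  by (simp add: AA_def pmf_map_of_set map_pmf_comp insert_absorb)

definition sig :: "nat\<times>nat\<times>nat \<Rightarrow> nat\<times>nat\<times>nat" where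
  "sig x = (if x = (0,2,0) then (1,0,2) else if x = (1,0,2) then (0,2,0)
     else if x = (2,2,1) then (3,1,2) else if x = (3,1,2) then (2,2,1) else x)"

lemma sym: "map_pmf (\<lambda>(s,x1,x2). (s div 2,x2)) (pmf_of_set AA) =
            map_pmf (\<lambda>(s,x1,x2). (s div 2,x1)) (pmf_of_set AA)"
proof -
  have inj: "inj_on sig AA" by (auto simp: AA_def inj_on_def sig_def)
  have im: "sig ` AA = AA" by (auto simp: AA_def sig_def)
  have h: "map_pmf sig (pmf_of_set AA) = pmf_of_set AA"
    using map_pmf_of_set_inj[OF inj AA_fin(2) AA_fin(1)] im by simp
  have "map_pmf (\<lambda>(s,x1,x2). (s div 2,x1)) (pmf_of_set AA) =
        map_pmf ((\<lambda>(s,x1,x2). (s div 2,x2)) \<circ> sig) (pmf_of_set AA)"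
    by (rule map_pmf_cong) (auto simp: AA_fin AA_def sig_def)
  also have "\<dots> = map_pmf (\<lambda>(s,x1,x2). (s div 2,x2)) (map_pmf sig (pmf_of_set AA))"
    by (simp add: map_pmf_comp comp_def)
  also have "\<dots> = map_pmf (\<lambda>(s,x1,x2). (s div 2,x2)) (pmf_of_set AA)"
    by (simp only: h)
  finally show ?thesis by simp
qed

lemma vals:
  "pmf (map_pmf (\<lambda>(s,x1,x2). (s,x2)) (pmf_of_set AA)) (1,2) = 1/4"
  "pmf (map_pmf (\<lambda>(s,x1,x2). (s,x2)) (pmf_of_set AA)) (3,2) = 1/4"
  "pmf (map_pmf (\<lambda>(s,x1,x2). x2) (pmf_of_set AA)) 2 = 1/2"
  "pmf (map_pmf (\<lambda>(s,x1,x2). (s,x1)) (pmf_of_set AA)) (1,0) = 1/8"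
  "pmf (map_pmf (\<lambda>(s,x1,x2). (s,x1)) (pmf_of_set AA)) (3,0) = 0"
  by (simp_all add: AA_def pmf_map_of_set)

lemma supp:
  "(a,b) \<in> set_pmf (map_pmf (\<lambda>(s,x1,x2). (s,x2)) (pmf_of_set AA)) \<Longrightarrow> a = 1 \<or> a = 3 \<Longrightarrow> b = 2"
  using AA_fin by (auto simp: AA_def)

lemma not_dominated:
  assumes Q1: "map_pmf (\<lambda>(s,x1,x2,y). (s,x1,x2)) Q = pmf_of_set AA"
    and Q2: "markov_chain (map_pmf (\<lambda>(s,x1,x2,y). (s,x2,y)) Q)"
    and Q3: "map_pmf (\<lambda>(s,x1,x2,y). (s,y)) Q = map_pmf (\<lambda>(s,x1,x2). (s,x1)) (pmf_of_set AA)"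
  shows False
proof -
  define R where "R = map_pmf (\<lambda>(s,x1,x2,y). (s,x2,y)) Q"
  have mAB: "map_pmf (\<lambda>(a,b,c). (a,b)) R = map_pmf (\<lambda>(s,x1,x2). (s,x2)) (pmf_of_set AA)"
    unfolding R_def Q1[symmetric] by (simp add: map_pmf_comp case_prod_beta)
  have mB: "map_pmf (\<lambda>(a,b,c). b) R = map_pmf (\<lambda>(s,x1,x2). x2) (pmf_of_set AA)"
    unfolding R_def Q1[symmetric] by (simp add: map_pmf_comp case_prod_beta)
  have mAC: "map_pmf (\<lambda>(a,b,c). (a,c)) R = map_pmf (\<lambda>(s,x1,x2). (s,x1)) (pmf_of_set AA)"
    unfolding R_def Q3[symmetric] by (auto simp: map_pmf_comp intro!: map_pmf_cong)
  have mk: "pmf R (a,b,c) * pmf (map_pmf (\<lambda>(a,b,c). b) R) b =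
     pmf (map_pmf (\<lambda>(a,b,c). (a,b)) R) (a,b) * pmf (map_pmf (\<lambda>(a,b,c). (b,c)) R) (b,c)" for a b c
    using Q2 unfolding R_def[symmetric] markov_chain_def by blast
  have e1: "pmf R (1,2,0) = pmf R (3,2,0)"
    using mk[of 1 2 0] mk[of 3 2 0] unfolding mAB mB vals by simp
  have f1: "pmf (map_pmf (\<lambda>(a,b,c). (a,c)) R) (1,0) = pmf R (1,2,0)"
    by (rule fiber) (use supp in \<open>auto simp: mAB\<close>)
  have f3: "pmf (map_pmf (\<lambda>(a,b,c). (a,c)) R) (3,0) = pmf R (3,2,0)"
    by (rule fiber) (use supp in \<open>auto simp: mAB\<close>)
  show False using f1 f3 e1 unfolding mAC vals by simp
qed

theorem corollary1:
  shows "\<not> (\<exists>SI UI CI. nonneg_decomp SI UI CI \<and> blackwell UI \<and> left_monotone SI)"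
proof
  assume "\<exists>SI UI CI. nonneg_decomp SI UI CI \<and> blackwell UI \<and> left_monotone SI"
  then obtain SI UI CI where d: "nonneg_decomp SI UI CI" and b: "blackwell UI"
    and l: "left_monotone SI" by blast
  define P where "P = pmf_of_set AA"
  define P' where "P' = map_pmf (\<lambda>(s,x1,x2). (s div 2, x1, x2)) P"
  have finP: "fin_dist P" unfolding fin_dist_def P_def using AA_fin by simp
  have finP': "fin_dist P'" using finP unfolding fin_dist_def P'_def by simp
  have dP: "I_S_X1 P = SI P + UI P" "UI P \<ge> 0" using d finP unfolding nonneg_decomp_def by auto
  have dP': "I_S_X1 P' = SI P' + UI P'" using d finP' unfolding nonneg_decomp_def by auto
  have lm: "SI P' \<le> SI P"
    using l[unfolded left_monotone_def, rule_format, OF finP, of "\<lambda>s. s div 2"] unfolding P'_def by simp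
  have i1: "I_S_X1 P = 1/2" unfolding I_S_X1_def P_def by (rule I1)
  have c2: "map_pmf (\<lambda>(s,x1,x2). (s,x1)) P' = map_pmf (\<lambda>(s,x1,x2). (s div 2,x1)) P"
    unfolding P'_def by (auto simp: map_pmf_comp intro!: map_pmf_cong)
  have i2: "I_S_X1 P' = 1/2" unfolding I_S_X1_def c2 P_def by (rule I2)
  define Q where "Q = map_pmf (\<lambda>(s,x1,x2). (s,x1,x2,x2)) P'"
  have "UI P' = 0"
  proof -
    have "fin_dist Q" using finP' unfolding fin_dist_def Q_def by simp
    moreover have "map_pmf (\<lambda>(s,x1,x2,y). (s,x1,x2)) Q = P'"
      unfolding Q_def by (simp add: map_pmf_comp case_prod_beta)
    moreover have "map_pmf (\<lambda>(s,x1,x2,y). (s,x2,y)) Q =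
       map_pmf (\<lambda>(a,b). (a,b,b)) (map_pmf (\<lambda>(s,x1,x2). (s,x2)) P')"
      unfolding Q_def by (simp add: map_pmf_comp case_prod_beta)
    then have "markov_chain (map_pmf (\<lambda>(s,x1,x2,y). (s,x2,y)) Q)" by (simp add: markov_dup)
    moreover have "map_pmf (\<lambda>(s,x1,x2,y). (s,y)) Q = map_pmf (\<lambda>(s,x1,x2). (s,x1)) P'"
    proof -
      have "map_pmf (\<lambda>(s,x1,x2,y). (s,y)) Q = map_pmf (\<lambda>(s,x1,x2). (s div 2,x2)) P"
        unfolding Q_def P'_def by (auto simp: map_pmf_comp intro!: map_pmf_cong)
      then show ?thesis using sym c2 unfolding P_def by simp
    qed
    ultimately show ?thesis using b finP' unfolding blackwell_def by blast
  qed
  moreover have "UI P \<noteq> 0"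
  proof
    assume "UI P = 0"
    then obtain Q :: "(nat \<times> nat \<times> nat \<times> nat) pmf" where
      "map_pmf (\<lambda>(s,x1,x2,y). (s,x1,x2)) Q = P"
      "markov_chain (map_pmf (\<lambda>(s,x1,x2,y). (s,x2,y)) Q)"
      "map_pmf (\<lambda>(s,x1,x2,y). (s,y)) Q = map_pmf (\<lambda>(s,x1,x2). (s,x1)) P"
      using b finP unfolding blackwell_def by blast
    then show False using not_dominated unfolding P_def by blast
  qed
  ultimately show False using dP dP' lm i1 i2 by linarith
qed

end
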